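(* Let $\mathcal{H}_o=(V,\vec H,\bm{w})$ be a strongly connected weighted oriented hypergraph with $|V|\ge2$, and let $w_{\max}=\max_{h\in\vec H}w_h$. (i) If $h=(A_h,B_h)\in\vec H$ is such that the limit $\kappa(h)=\lim_{\alpha\to1^-}\kappa_\alpha(h)/(1-\alpha)$ exists in $\mathbb{R}$ and $\kappa(h)>0$, then $L(h)\le\frac{2w_{\max}}{\kappa(h)}$. (ii) If there is a constant $\kappa>0$ such that $\kappa(u,v)\ge\kappa$ for every hyperedge $h\in\vec H$ and all $u\in A_h$, $v\in B_h$, then $$\mathrm{diam}(\mathcal{H}_o)\le\frac{2w_{\max}}{\kappa}.$$
   Context: A weighted oriented hypergraph $(V,\vec H,\bm w)$ has a finite vertex set $V$, a finite set $\vec H$ of hyperedges, each an ordered pair $h=(A_h,B_h)$ of nonempty subsets of $V$ with $A_h\cap B_h=\emptyset$, such that for every $h\in\vec H$ its reversal $h^-=(B_h,A_h)$ also belongs to $\vec H$, and positive weights with $w_h=w_{h^-}$. A directed path from $u$ to $v$ is a sequence of hyperedges $h_1,\dots,h_l$ with $u\in A_{h_1}$, $v\in B_{h_l}$, $B_{h_j}\cap A_{h_{j+1}}\ne\emptyset$; strongly connected means such a path exists for all distinct $u,v$. $d(u,v)=\inf_\gamma\sum_{h\in\gamma}w_h$ over directed paths from $u$ to $v$ ($u\ne v$), $d(u,u)=0$; $\mathrm{diam}(\mathcal{H}_o)=\max_{u,v}d(u,v)$; $L(h)=\min_{x\in A_h,y\in B_h}d(x,y)$. $\Gamma^{in}(v)=\{z:\exists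 h'\text{ with }v\in B_{h'},z\in A_{h'}\}$, $\Gamma^{out}(v)=\{z:\exists h'\text{ with }v\in A_{h'},z\in B_{h'}\}$, and $\Gamma(v)=\Gamma^{out}(v)$. Hyperedge measures, for $A_h=\{x_1,\dots,x_n\}$, $B_h=\{y_1,\dots,y_m\}$, $\alpha\in[0,1]$: $\mu^\alpha_{A_h}=\sum_i\mu^\alpha_{x_i}$ with $\mu^\alpha_{x_i}(x_i)=\alpha/n$, $\mu^\alpha_{x_i}(z)=(1-\alpha)\sum_{h':x_i\in B_{h'},z\in A_{h'}}\frac{1}{n|A_{h'}|}\frac{w_{h'}}{\sum_{h'':x_i\in B_{h''}}w_{h''}}$ for $z\in\Gamma^{in}(x_i)$, $0$ otherwise; $\mu^\alpha_{B_h}=\sum_j\mu^\alpha_{y_j}$ with $\mu^\alpha_{y_j}(y_j)=\alpha/m$, $\mu^\alpha_{y_j}(z)=(1-\alpha)\sum_{h':y_j\in A_{h'},z\in B_{h'}}\frac{1}{m|B_{h'}|}\frac{w_{h'}}{\sum_{h'':y_j\in A_{h''}}w_{h''}}$ for $z\in\Gamma^{out}(y_j)$, $0$ otherwise; $\kappa_\alpha(h)=1-W(\mu^\alpha_{A_h},\mu^\alpha_{B_h})/L(h)$. Vertex measures: $\mu^\alpha_{u^{in}}(u)=\alpha$, $\mu^\alpha_{u^{in}}(z)=(1-\alpha)\sum_{h':u\in B_{h'},z\in A_{h'}}\frac{1}{|A_{h'}|}\frac{w_{h'}}{\sum_{h'':u\in B_{h''}}w_{h''}}$ for $z\in\Gamma(u)$,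 $0$ otherwise; $\mu^\alpha_{v^{out}}(v)=\alpha$, $\mu^\alpha_{v^{out}}(z)=(1-\alpha)\sum_{h':v\in A_{h'},z\in B_{h'}}\frac{1}{|B_{h'}|}\frac{w_{h'}}{\sum_{h'':v\in A_{h''}}w_{h''}}$ for $z\in\Gamma(v)$, $0$ otherwise. $W(\mu,\nu)=\inf_\pi\sum_{x,y}\pi(x,y)d(x,y)$ over couplings $\pi$ of $\mu,\nu$. For distinct $u,v$: $\kappa_\alpha(u,v)=1-W(\mu^\alpha_{u^{in}},\mu^\alpha_{v^{out}})/d(u,v)$ and $\kappa(u,v)=\lim_{\alpha\to1^-}\kappa_\alpha(u,v)/(1-\alpha)$ (this limit exists in $\mathbb{R}$). *)

theory Defs
  imports "HOL-Analysis.Analysis"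
begin

text \<open>A hyperedge is a pair (A_h, B_h) of vertex sets; fst = tail A_h, snd = head B_h.\<close>

type_synonym 'v hedge = "'v set \<times> 'v set"

definition oriented_hypergraph :: "'v set \<Rightarrow> 'v hedge set \<Rightarrow> ('v hedge \<Rightarrow> real) \<Rightarrow> bool" where
  "oriented_hypergraph V H w \<longleftrightarrow> finite V \<and> finite H \<and>
     (\<forall>h\<in>H. fst h \<noteq> {} \<and> snd h \<noteq> {} \<and> fst h \<subseteq> V \<and> snd h \<subseteq> V \<and> fst h \<inter> snd h = {}
        \<and> (snd h, fst h) \<in> H \<and> 0 < w h \<and> w (snd h, fst h) = w h)"

definition dpath :: "'v hedge set \<Rightarrow> 'v \<Rightarrow> 'v \<Rightarrow> 'v hedge list \<Rightarrow> bool" where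
  "dpath H u v hs \<longleftrightarrow> hs \<noteq> [] \<and> set hs \<subseteq> H \<and> u \<in> fst (hd hs) \<and> v \<in> snd (last hs) \<and>
     (\<forall>j. Suc j < length hs \<longrightarrow> snd (hs ! j) \<inter> fst (hs ! Suc j) \<noteq> {})"

definition strongly_connected :: "'v set \<Rightarrow> 'v hedge set \<Rightarrow> bool" where
  "strongly_connected V H \<longleftrightarrow> (\<forall>u\<in>V. \<forall>v\<in>V. u \<noteq> v \<longrightarrow> (\<exists>hs. dpath H u v hs))"

definition hdist :: "'v hedge set \<Rightarrow> ('v hedge \<Rightarrow> real) \<Rightarrow> 'v \<Rightarrow> 'v \<Rightarrow> real" where
  "hdist H w u v = (if u = v then 0 else Inf {sum_list (map w hs) | hs. dpath H u v hs})"

definition diam :: "'v set \<Rightarrow> 'v hedge set \<Rightarrow> ('v hedge \<Rightarrow> real) \<Rightarrow> real" where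
  "diam V H w = Max {hdist H w u v | u v. u \<in> V \<and> v \<in> V}"

definition hedge_len :: "'v hedge set \<Rightarrow> ('v hedge \<Rightarrow> real) \<Rightarrow> 'v hedge \<Rightarrow> real" where
  "hedge_len H w h = Min {hdist H w x y | x y. x \<in> fst h \<and> y \<in> snd h}"

definition wmax :: "'v hedge set \<Rightarrow> ('v hedge \<Rightarrow> real) \<Rightarrow> real" where
  "wmax H w = Max (w ` H)"

definition wasserstein :: "'v set \<Rightarrow> ('v \<Rightarrow> 'v \<Rightarrow> real) \<Rightarrow> ('v \<Rightarrow> real) \<Rightarrow> ('v \<Rightarrow> real) \<Rightarrow> real" where
  "wasserstein V d \<mu> \<nu> = Inf {(\<Sum>x\<in>V. \<Sum>y\<in>V. \<pi> x y * d x y) | \<pi>.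
      (\<forall>x\<in>V. \<forall>y\<in>V. 0 \<le> \<pi> x y) \<and> (\<forall>x\<in>V. (\<Sum>y\<in>V. \<pi> x y) = \<mu> x) \<and> (\<forall>y\<in>V. (\<Sum>x\<in>V. \<pi> x y) = \<nu> y)}"

definition mu_tail_vertex :: "'v hedge set \<Rightarrow> ('v hedge \<Rightarrow> real) \<Rightarrow> real \<Rightarrow> real \<Rightarrow> 'v \<Rightarrow> 'v \<Rightarrow> real" where
  "mu_tail_vertex H w \<alpha> n x z =
     (if z = x then \<alpha> / n else 0) +
     (1 - \<alpha>) * (\<Sum>h'\<in>{h'\<in>H. x \<in> snd h' \<and> z \<in> fst h'}.
        (1 / (n * real (card (fst h')))) * (w h' / (\<Sum>h''\<in>{h''\<in>H. x \<in> snd h''}. w h'')))"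

definition mu_head_vertex :: "'v hedge set \<Rightarrow> ('v hedge \<Rightarrow> real) \<Rightarrow> real \<Rightarrow> real \<Rightarrow> 'v \<Rightarrow> 'v \<Rightarrow> real" where
  "mu_head_vertex H w \<alpha> m y z =
     (if z = y then \<alpha> / m else 0) +
     (1 - \<alpha>) * (\<Sum>h'\<in>{h'\<in>H. y \<in> fst h' \<and> z \<in> snd h'}.
        (1 / (m * real (card (snd h')))) * (w h' / (\<Sum>h''\<in>{h''\<in>H. y \<in> fst h''}. w h'')))"

definition mu_A :: "'v hedge set \<Rightarrow> ('v hedge \<Rightarrow> real) \<Rightarrow> real \<Rightarrow> 'v hedge \<Rightarrow> 'v \<Rightarrow> real" where
  "mu_A H w \<alpha> h z = (\<Sum>x\<in>fst h. mu_tail_vertex H w \<alpha> (real (card (fst h))) x z)"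

definition mu_B :: "'v hedge set \<Rightarrow> ('v hedge \<Rightarrow> real) \<Rightarrow> real \<Rightarrow> 'v hedge \<Rightarrow> 'v \<Rightarrow> real" where
  "mu_B H w \<alpha> h z = (\<Sum>y\<in>snd h. mu_head_vertex H w \<alpha> (real (card (snd h))) y z)"

definition kappa_alpha_edge :: "'v set \<Rightarrow> 'v hedge set \<Rightarrow> ('v hedge \<Rightarrow> real) \<Rightarrow> real \<Rightarrow> 'v hedge \<Rightarrow> real" where
  "kappa_alpha_edge V H w \<alpha> h =
     1 - wasserstein V (hdist H w) (mu_A H w \<alpha> h) (mu_B H w \<alpha> h) / hedge_len H w h"

definition mu_in :: "'v hedge set \<Rightarrow> ('v hedge \<Rightarrow> real) \<Rightarrow> real \<Rightarrow> 'v \<Rightarrow> 'v \<Rightarrow> real" where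
  "mu_in H w \<alpha> u z =
     (if z = u then \<alpha> else 0) +
     (1 - \<alpha>) * (\<Sum>h'\<in>{h'\<in>H. u \<in> snd h' \<and> z \<in> fst h'}.
        (1 / real (card (fst h'))) * (w h' / (\<Sum>h''\<in>{h''\<in>H. u \<in> snd h''}. w h'')))"

definition mu_out :: "'v hedge set \<Rightarrow> ('v hedge \<Rightarrow> real) \<Rightarrow> real \<Rightarrow> 'v \<Rightarrow> 'v \<Rightarrow> real" where
  "mu_out H w \<alpha> v z =
     (if z = v then \<alpha> else 0) +
     (1 - \<alpha>) * (\<Sum>h'\<in>{h'\<in>H. v \<in> fst h' \<and> z \<in> snd h'}.
        (1 / real (card (snd h'))) * (w h' / (\<Sum>h''\<in>{h''\<in>H. v \<in> fst h''}. w h'')))"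

definition kappa_alpha_vertex :: "'v set \<Rightarrow> 'v hedge set \<Rightarrow> ('v hedge \<Rightarrow> real) \<Rightarrow> real \<Rightarrow> 'v \<Rightarrow> 'v \<Rightarrow> real" where
  "kappa_alpha_vertex V H w \<alpha> u v =
     1 - wasserstein V (hdist H w) (mu_in H w \<alpha> u) (mu_out H w \<alpha> v) / hdist H w u v"

definition kappa_vertex :: "'v set \<Rightarrow> 'v hedge set \<Rightarrow> ('v hedge \<Rightarrow> real) \<Rightarrow> 'v \<Rightarrow> 'v \<Rightarrow> real" where
  "kappa_vertex V H w u v =
     Lim (at_left 1) (\<lambda>\<alpha>. kappa_alpha_vertex V H w \<alpha> u v / (1 - \<alpha>))"

end

theory Submission
  imports Defs
begin

locale hg =
  fixes V :: "'v set" and H :: "'v hedge set" and w :: "'v hedge \<Rightarrow> real"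
  assumes oh: "oriented_hypergraph V H w"
    and sc: "strongly_connected V H"
    and c2: "card V \<ge> 2"
begin

lemma finV: "finite V" and finH: "finite H"
  using oh by (auto simp: oriented_hypergraph_def)

lemma edge: assumes "h \<in> H"
  shows "fst h \<noteq> {}" "snd h \<noteq> {}" "fst h \<subseteq> V" "snd h \<subseteq> V" "fst h \<inter> snd h = {}"
    "(snd h, fst h) \<in> H" "0 < w h" "w (snd h, fst h) = w h"
  using oh assms by (auto simp: oriented_hypergraph_def)

lemma cost_nonneg: "set hs \<subseteq> H \<Longrightarrow> 0 \<le> sum_list (map w hs)"
  by (induction hs) (auto dest: edge(7) intro: add_nonneg_nonneg less_imp_le)

lemma path_exists: "u \<in> V \<Longrightarrow> v \<in> V \<Longrightarrow> u \<noteq> v \<Longrightarrow> \<exists>hs. dpath H u v hs"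
  using sc by (auto simp: strongly_connected_def)

abbreviation d where "d \<equiv> hdist H w"

lemma costs_ne: "u \<in> V \<Longrightarrow> v \<in> V \<Longrightarrow> u \<noteq> v \<Longrightarrow> {sum_list (map w hs) | hs. dpath H u v hs} \<noteq> {}"
  using path_exists by auto

lemma costs_bdd: "bdd_below {sum_list (map w hs) | hs. dpath H u v hs}"
  by (rule bdd_belowI[of _ 0]) (auto simp: dpath_def intro: cost_nonneg)

lemma d_nonneg: assumes "u \<in> V" "v \<in> V" shows "0 \<le> d u v"
proof (cases "u = v")
  case False
  have ne: "{sum_list (map w hs) | hs. dpath H u v hs} \<noteq> {}" by (rule costs_ne[OF assms False])
  have "0 \<le> Inf {sum_list (map w hs) | hs. dpath H u v hs}"
    by (rule cInf_greatest[OF ne]) (auto simp: dpath_def intro: cost_nonneg)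
  then show ?thesis unfolding hdist_def using False by simp
qed (simp add: hdist_def)

lemma d_le_path: "dpath H u v hs \<Longrightarrow> u \<noteq> v \<Longrightarrow> d u v \<le> sum_list (map w hs)"
  unfolding hdist_def by (auto intro!: cInf_lower costs_bdd)

lemma d_le_edge: assumes "h \<in> H" "a \<in> fst h" "b \<in> snd h" shows "d a b \<le> w h"
proof -
  have "a \<noteq> b" using edge(5)[OF assms(1)] assms by auto
  moreover have "dpath H a b [h]" using assms by (auto simp: dpath_def)
  ultimately show ?thesis using d_le_path by fastforce
qed

lemma d_le_edge': assumes "h \<in> H" "a \<in> fst h" "b \<in> snd h" shows "d b a \<le> w h"
  using d_le_edge[OF edge(6)[OF assms(1)]] assms edge(8)[OF assms(1)] by auto

lemma dpath_append:
  assumes "dpath H a b p" "dpath H b c q" shows "dpath H a c (p @ q)"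
proof -
  have "\<forall>j. Suc j < length (p @ q) \<longrightarrow> snd ((p@q) ! j) \<inter> fst ((p@q) ! Suc j) \<noteq> {}"
  proof (intro allI impI)
    fix j assume j: "Suc j < length (p @ q)"
    consider "Suc j < length p" | "Suc j = length p" | "Suc j > length p" by linarith
    then show "snd ((p@q) ! j) \<inter> fst ((p@q) ! Suc j) \<noteq> {}"
    proof cases
      case 1 then show ?thesis using assms(1) by (auto simp: dpath_def nth_append)
    next
      case 2
      have jj: "j = length p - 1" using 2 by simp
      have "(p@q) ! j = last p" using 2 assms(1) unfolding jj by (auto simp: dpath_def nth_append last_conv_nth)
      moreover have "(p@q) ! Suc j = hd q" using 2 assms(2) by (auto simp: dpath_def nth_append hd_conv_nth)
      ultimately show ?thesis using assms by (auto simp: dpath_def)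
    next
      case 3
      then obtain k where k: "j = length p + k" by (metis less_Suc_eq_le le_Suc_ex add_Suc_right Suc_le_lessD le_less) 
      show ?thesis using assms(2) j 3 k by (auto simp: dpath_def nth_append)
    qed
  qed
  then show ?thesis using assms by (auto simp: dpath_def)
qed


lemma d_triangle: assumes "a \<in> V" "b \<in> V" "c \<in> V" shows "d a c \<le> d a b + d b c"
proof -
  consider "a = c" | "a = b" | "b = c" | "a \<noteq> c" "a \<noteq> b" "b \<noteq> c" by blast
  then show ?thesis
  proof cases
    case 1 then show ?thesis using d_nonneg assms by (simp add: hdist_def add_nonneg_nonneg)
  next
    case 2 then show ?thesis by (simp add: hdist_def)
  next
    case 3 then show ?thesis by (simp add: hdist_def)
  next
    case 4
    have key: "d a c - sum_list (map w q) \<le> d a b" if q: "dpath H b c q" for q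
    proof -
      have "d a c - sum_list (map w q) \<le> Inf {sum_list (map w hs) | hs. dpath H a b hs}"
      proof (rule cInf_greatest[OF costs_ne[OF assms(1,2) 4(2)]])
        fix x assume "x \<in> {sum_list (map w hs) | hs. dpath H a b hs}"
        then obtain p where p: "dpath H a b p" "x = sum_list (map w p)" by auto
        have "d a c \<le> sum_list (map w (p @ q))" using d_le_path[OF dpath_append[OF p(1) q] 4(1)] .
        then show "d a c - sum_list (map w q) \<le> x" using p by simp
      qed
      then show ?thesis using 4 by (simp add: hdist_def)
    qed
    have "d a c - d a b \<le> Inf {sum_list (map w hs) | hs. dpath H b c hs}"
      by (rule cInf_greatest[OF costs_ne[OF assms(2,3) 4(3)]]) (use key in force)
    then show ?thesis using 4 by (simp add: hdist_def)
  qed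
qed

lemma other: assumes "u \<in> V" shows "\<exists>v\<in>V. v \<noteq> u"
proof (rule ccontr)
  assume "\<not> ?thesis"
  then have "V = {u}" using assms by blast
  then show False using c2 by simp
qed

lemma V_ne: "V \<noteq> {}" using c2 by (metis card.empty not_numeral_le_zero)

lemma H_ne: "H \<noteq> {}"
proof -
  obtain u where u: "u \<in> V" using V_ne by blast
  obtain v where "v \<in> V" "v \<noteq> u" using other[OF u] by blast
  note u this
  then obtain hs where "dpath H u v hs" using path_exists by blast
  then show ?thesis by (auto simp: dpath_def)
qed

definition wmx where "wmx = wmax H w"

lemma w_le_wmax: "h \<in> H \<Longrightarrow> w h \<le> wmx"
  unfolding wmx_def wmax_def using finH by auto

lemma wmax_pos: "0 < wmx"
  using H_ne edge(7) w_le_wmax by (meson all_not_in_conv less_le_trans)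

lemma vertex_edges: assumes "u \<in> V" shows "\<exists>h\<in>H. u \<in> snd h" "\<exists>h\<in>H. u \<in> fst h"
proof -
  obtain v where "v \<in> V" "v \<noteq> u"
    using other assms by blast
  then obtain hs where hs: "dpath H u v hs" using path_exists assms by blast
  then have "hd hs \<in> H" "u \<in> fst (hd hs)" by (auto simp: dpath_def)
  then show "\<exists>h\<in>H. u \<in> fst h" by blast
  have "(snd (hd hs), fst (hd hs)) \<in> H" using edge(6) \<open>hd hs \<in> H\<close> by blast
  then show "\<exists>h\<in>H. u \<in> snd h" using \<open>u \<in> fst (hd hs)\<close> by force
qed

lemma d_pos: assumes "a \<in> V" "b \<in> V" "a \<noteq> b" shows "0 < d a b"
proof -
  define m where "m = Min (w ` H)"
  have m: "0 < m" unfolding m_def using finH H_ne edge(7) by auto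
  have "m \<le> Inf {sum_list (map w hs) | hs. dpath H a b hs}"
  proof (rule cInf_greatest[OF costs_ne[OF assms]])
    fix x assume "x \<in> {sum_list (map w hs) | hs. dpath H a b hs}"
    then obtain p where p: "dpath H a b p" "x = sum_list (map w p)" by auto
    then obtain h t where pt: "p = h # t" by (cases p) (auto simp: dpath_def)
    have "h \<in> H" "set t \<subseteq> H" using p pt by (auto simp: dpath_def)
    then have "m \<le> w h" "0 \<le> sum_list (map w t)" using finH cost_nonneg by (auto simp: m_def)
    then show "m \<le> x" using p pt by simp
  qed
  then show ?thesis using m assms by (simp add: hdist_def)
qed

end

context hg begin

lemma mu_in_sum:
  assumes u: "u \<in> V"
  shows "(\<Sum>z\<in>V. mu_in H w \<alpha> u z * \<psi> z) = \<alpha> * \<psi> u + (1-\<alpha>) *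
     (\<Sum>h\<in>{h\<in>H. u \<in> snd h}. (w h / (\<Sum>h''\<in>{h''\<in>H. u \<in> snd h''}. w h'')) * ((\<Sum>z\<in>fst h. \<psi> z) / real (card (fst h))))"
proof -
  define S where "S = (\<Sum>h''\<in>{h''\<in>H. u \<in> snd h''}. w h'')"
  define c where "c h = (1 / real (card (fst h))) * (w h / S)" for h
  define P where "P z = (\<Sum>h\<in>{h\<in>H. u \<in> snd h \<and> z \<in> fst h}. c h)" for z
  have mu: "mu_in H w \<alpha> u z = (if z = u then \<alpha> else 0) + (1-\<alpha>) * P z" for z
    unfolding mu_in_def P_def c_def S_def by simp
  have 1: "(\<Sum>z\<in>V. mu_in H w \<alpha> u z * \<psi> z) = (\<Sum>z\<in>V. (if z = u then \<alpha> else 0) * \<psi> z) + (1-\<alpha>) * (\<Sum>z\<in>V. P z * \<psi> z)"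
    unfolding mu by (simp add: distrib_right sum.distrib sum_distrib_left mult.assoc)
  have 2: "(\<Sum>z\<in>V. (if z = u then \<alpha> else 0) * \<psi> z) = \<alpha> * \<psi> u"
  proof -
    have "(\<Sum>z\<in>V. (if z = u then \<alpha> else 0) * \<psi> z) = (\<Sum>z\<in>V. (if u = z then \<alpha> * \<psi> u else 0))"
      by (rule sum.cong) auto
    also have "\<dots> = \<alpha> * \<psi> u" using u finV by simp
    finally show ?thesis .
  qed
  have finE: "finite {h\<in>H. u \<in> snd h}" using finH by simp
  have 3: "(\<Sum>z\<in>V. P z * \<psi> z) = (\<Sum>h\<in>{h\<in>H. u \<in> snd h}. c h * (\<Sum>z\<in>fst h. \<psi> z))"
  proof -
    have "(\<Sum>z\<in>V. P z * \<psi> z) = (\<Sum>z\<in>V. \<Sum>h\<in>{h. h \<in> {h\<in>H. u \<in> snd h} \<and> z \<in> fst h}. c h * \<psi> z)"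
      unfolding P_def by (simp add: sum_distrib_right conj_assoc)
    also have "\<dots> = (\<Sum>h\<in>{h\<in>H. u \<in> snd h}. \<Sum>z\<in>{z. z \<in> V \<and> z \<in> fst h}. c h * \<psi> z)"
      by (rule sum.swap_restrict[OF finV finE])
    also have "\<dots> = (\<Sum>h\<in>{h\<in>H. u \<in> snd h}. c h * (\<Sum>z\<in>fst h. \<psi> z))"
    proof (rule sum.cong[OF refl])
      fix h assume "h \<in> {h\<in>H. u \<in> snd h}"
      then have "{z. z \<in> V \<and> z \<in> fst h} = fst h" using edge(3)[of h] by auto
      then show "(\<Sum>z\<in>{z. z \<in> V \<and> z \<in> fst h}. c h * \<psi> z) = c h * (\<Sum>z\<in>fst h. \<psi> z)"
        by (simp add: sum_distrib_left)
    qed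
    finally show ?thesis .
  qed
  show ?thesis unfolding 1 2 3 S_def[symmetric] c_def by (simp add: field_simps)
qed


lemma S_pos: assumes "u \<in> V" shows "0 < (\<Sum>h''\<in>{h''\<in>H. u \<in> snd h''}. w h'')"
proof -
  obtain h where h: "h \<in> H" "u \<in> snd h" using vertex_edges(1)[OF assms] by blast
  have "0 < w h" using edge(7)[OF h(1)] .
  also have "w h \<le> (\<Sum>h''\<in>{h''\<in>H. u \<in> snd h''}. w h'')"
    by (rule member_le_sum) (use h finH edge(7) in \<open>auto intro: less_imp_le\<close>)
  finally show ?thesis .
qed

lemma wsum_one: assumes "u \<in> V"
  shows "(\<Sum>h\<in>{h\<in>H. u \<in> snd h}. w h / (\<Sum>h''\<in>{h''\<in>H. u \<in> snd h''}. w h'')) = 1"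
  using S_pos[OF assms] by (simp add: sum_divide_distrib[symmetric])

lemma avg_ge:
  assumes u: "u \<in> V" and b: "\<And>h z. h \<in> H \<Longrightarrow> u \<in> snd h \<Longrightarrow> z \<in> fst h \<Longrightarrow> lo \<le> \<psi> z"
  shows "lo \<le> (\<Sum>h\<in>{h\<in>H. u \<in> snd h}. (w h / (\<Sum>h''\<in>{h''\<in>H. u \<in> snd h''}. w h'')) * ((\<Sum>z\<in>fst h. \<psi> z) / real (card (fst h))))"
proof -
  define S where "S = (\<Sum>h''\<in>{h''\<in>H. u \<in> snd h''}. w h'')"
  have S: "0 < S" using S_pos[OF u] S_def by simp
  have "(\<Sum>h\<in>{h\<in>H. u \<in> snd h}. (w h / S) * lo) = (\<Sum>h\<in>{h\<in>H. u \<in> snd h}. w h / S) * lo"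
    by (rule sum_distrib_right[symmetric])
  then have "lo = (\<Sum>h\<in>{h\<in>H. u \<in> snd h}. (w h / S) * lo)"
    using wsum_one[OF u] by (simp add: S_def)
  also have "\<dots> \<le> (\<Sum>h\<in>{h\<in>H. u \<in> snd h}. (w h / S) * ((\<Sum>z\<in>fst h. \<psi> z) / real (card (fst h))))"
  proof (rule sum_mono)
    fix h assume h: "h \<in> {h\<in>H. u \<in> snd h}"
    have fin: "finite (fst h)" using edge(3) h finV finite_subset by blast
    have cp: "0 < real (card (fst h))" using fin edge(1) h by (simp add: card_gt_0_iff)
    have "real (card (fst h)) * lo \<le> (\<Sum>z\<in>fst h. \<psi> z)"
      using sum_bounded_below[of "fst h" lo \<psi>] b[of h] h by auto
    then have "lo \<le> (\<Sum>z\<in>fst h. \<psi> z) / real (card (fst h))" using cp by (simp add: field_simps)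
    moreover have "0 \<le> w h / S" using S edge(7)[of h] h by auto
    ultimately show "(w h / S) * lo \<le> (w h / S) * ((\<Sum>z\<in>fst h. \<psi> z) / real (card (fst h)))"
      by (rule mult_left_mono)
  qed
  finally show ?thesis by (simp add: S_def)
qed

lemma avg_le:
  assumes u: "u \<in> V" and b: "\<And>h z. h \<in> H \<Longrightarrow> u \<in> snd h \<Longrightarrow> z \<in> fst h \<Longrightarrow> \<psi> z \<le> hi"
  shows "(\<Sum>h\<in>{h\<in>H. u \<in> snd h}. (w h / (\<Sum>h''\<in>{h''\<in>H. u \<in> snd h''}. w h'')) * ((\<Sum>z\<in>fst h. \<psi> z) / real (card (fst h)))) \<le> hi"
proof -
  have "-hi \<le> (\<Sum>h\<in>{h\<in>H. u \<in> snd h}. (w h / (\<Sum>h''\<in>{h''\<in>H. u \<in> snd h''}. w h'')) * ((\<Sum>z\<in>fst h. - \<psi> z) / real (card (fst h))))"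
    by (rule avg_ge[OF u]) (use b in auto)
  then show ?thesis by (simp add: sum_negf sum_distrib_left[symmetric] sum_divide_distrib[symmetric])
qed

definition lip where "lip \<phi> \<longleftrightarrow> (\<forall>a\<in>V. \<forall>b\<in>V. \<phi> a - \<phi> b \<le> d a b)"

lemma mu_in_lip:
  assumes u: "u \<in> V" and l: "lip \<phi>" and a: "0 \<le> \<alpha>" "\<alpha> \<le> 1"
  shows "\<phi> u - (1-\<alpha>) * wmx \<le> (\<Sum>z\<in>V. mu_in H w \<alpha> u z * \<phi> z)"
    "(\<Sum>z\<in>V. mu_in H w \<alpha> u z * \<phi> z) \<le> \<phi> u + (1-\<alpha>) * wmx"
proof -
  have bz: "\<phi> u - wmx \<le> \<phi> z \<and> \<phi> z \<le> \<phi> u + wmx" if "h \<in> H" "u \<in> snd h" "z \<in> fst h" for h z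
  proof -
    have zV: "z \<in> V" using edge(3) that by blast
    have "\<phi> z - \<phi> u \<le> d z u" "\<phi> u - \<phi> z \<le> d u z" using l zV u by (auto simp: lip_def)
    moreover have "d z u \<le> w h" "d u z \<le> w h" using d_le_edge d_le_edge' that by auto
    moreover have "w h \<le> wmx" using w_le_wmax that by auto
    ultimately show ?thesis by linarith
  qed
  define A where "A = (\<Sum>h\<in>{h\<in>H. u \<in> snd h}. (w h / (\<Sum>h''\<in>{h''\<in>H. u \<in> snd h''}. w h'')) * ((\<Sum>z\<in>fst h. \<phi> z) / real (card (fst h))))"
  have A1: "\<phi> u - wmx \<le> A" unfolding A_def by (rule avg_ge[OF u]) (use bz in blast)
  have A2: "A \<le> \<phi> u + wmx" unfolding A_def by (rule avg_le[OF u]) (use bz in blast)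
  have eq: "(\<Sum>z\<in>V. mu_in H w \<alpha> u z * \<phi> z) = \<alpha> * \<phi> u + (1-\<alpha>) * A"
    unfolding A_def by (rule mu_in_sum[OF u])
  have "(1-\<alpha>) * (\<phi> u - wmx) \<le> (1-\<alpha>) * A" "(1-\<alpha>) * A \<le> (1-\<alpha>) * (\<phi> u + wmx)"
    using A1 A2 a by (auto intro: mult_left_mono)
  then show "\<phi> u - (1-\<alpha>) * wmx \<le> (\<Sum>z\<in>V. mu_in H w \<alpha> u z * \<phi> z)"
    "(\<Sum>z\<in>V. mu_in H w \<alpha> u z * \<phi> z) \<le> \<phi> u + (1-\<alpha>) * wmx"
    unfolding eq by (auto simp: algebra_simps)
qed

lemma mu_in_mass: assumes u: "u \<in> V" shows "(\<Sum>z\<in>V. mu_in H w \<alpha> u z) = 1"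
proof -
  have "(\<Sum>z\<in>V. mu_in H w \<alpha> u z * 1) = \<alpha> * 1 + (1-\<alpha>) *
     (\<Sum>h\<in>{h\<in>H. u \<in> snd h}. (w h / (\<Sum>h''\<in>{h''\<in>H. u \<in> snd h''}. w h'')) * ((\<Sum>z\<in>fst h. 1) / real (card (fst h))))"
    by (rule mu_in_sum[OF u])
  also have "(\<Sum>h\<in>{h\<in>H. u \<in> snd h}. (w h / (\<Sum>h''\<in>{h''\<in>H. u \<in> snd h''}. w h'')) * ((\<Sum>z\<in>fst h. 1) / real (card (fst h))))
     = (\<Sum>h\<in>{h\<in>H. u \<in> snd h}. (w h / (\<Sum>h''\<in>{h''\<in>H. u \<in> snd h''}. w h'')))"
  proof (rule sum.cong[OF refl])
    fix h assume h: "h \<in> {h\<in>H. u \<in> snd h}"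
    have fin: "finite (fst h)" using edge(3) h finV finite_subset by blast
    have cp: "0 < card (fst h)" using fin edge(1) h by (simp add: card_gt_0_iff)
    then show "(w h / (\<Sum>h''\<in>{h''\<in>H. u \<in> snd h''}. w h'')) * ((\<Sum>z\<in>fst h. 1) / real (card (fst h))) = w h / (\<Sum>h''\<in>{h''\<in>H. u \<in> snd h''}. w h'')"
      by simp
  qed
  finally show ?thesis using wsum_one[OF u] by simp
qed

lemma mu_in_nonneg: assumes "0 \<le> \<alpha>" "\<alpha> \<le> 1" shows "0 \<le> mu_in H w \<alpha> u z"
  unfolding mu_in_def using assms edge(7)
  by (intro add_nonneg_nonneg mult_nonneg_nonneg sum_nonneg divide_nonneg_nonneg) (auto intro: less_imp_le)

lemma mu_out_eq: "mu_out H w \<alpha> u z = mu_in H w \<alpha> u z"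
proof -
  define r where "r h = (snd h, fst h)" for h :: "'v hedge"
  have rr: "r (r h) = h" for h by (simp add: r_def)
  have rH: "h \<in> H \<Longrightarrow> r h \<in> H" for h using edge(6) r_def by simp
  have wr: "h \<in> H \<Longrightarrow> w (r h) = w h" for h using edge(8) r_def by simp
  have S: "(\<Sum>h''\<in>{h''\<in>H. u \<in> fst h''}. w h'') = (\<Sum>h''\<in>{h''\<in>H. u \<in> snd h''}. w h'')"
    by (rule sum.reindex_bij_witness[of _ r r]) (auto simp: rr rH wr, auto simp: r_def)
  have T: "(\<Sum>h'\<in>{h'\<in>H. u \<in> fst h' \<and> z \<in> snd h'}. 1 / real (card (snd h')) * (w h' / X))
     = (\<Sum>h'\<in>{h'\<in>H. u \<in> snd h' \<and> z \<in> fst h'}. 1 / real (card (fst h')) * (w h' / X))" for X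
    by (rule sum.reindex_bij_witness[of _ r r]) (auto simp: rr rH wr, auto simp: r_def)
  show ?thesis unfolding mu_in_def mu_out_def S T ..
qed

end

context hg begin

definition coupling :: "('v \<Rightarrow> real) \<Rightarrow> ('v \<Rightarrow> real) \<Rightarrow> ('v \<Rightarrow> 'v \<Rightarrow> real) \<Rightarrow> bool" where "coupling \<mu> \<nu> \<pi> \<longleftrightarrow>
  (\<forall>x\<in>V. \<forall>y\<in>V. 0 \<le> \<pi> x y) \<and> (\<forall>x\<in>V. (\<Sum>y\<in>V. \<pi> x y) = \<mu> x) \<and> (\<forall>y\<in>V. (\<Sum>x\<in>V. \<pi> x y) = \<nu> y)"

lemma W_def': "wasserstein V d \<mu> \<nu> = Inf {(\<Sum>x\<in>V. \<Sum>y\<in>V. \<pi> x y * d x y) | \<pi>. coupling \<mu> \<nu> \<pi>}"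
  unfolding wasserstein_def coupling_def ..

lemma coupling_ex:
  assumes "\<forall>x\<in>V. 0 \<le> \<mu> x" "\<forall>x\<in>V. 0 \<le> \<nu> x" "(\<Sum>x\<in>V. \<mu> x) = 1" "(\<Sum>x\<in>V. \<nu> x) = 1"
  shows "coupling \<mu> \<nu> (\<lambda>x y. \<mu> x * \<nu> y)"
  unfolding coupling_def
proof (intro conjI ballI)
  fix x y assume "x \<in> V" "y \<in> V" then show "0 \<le> \<mu> x * \<nu> y" using assms by (simp add: mult_nonneg_nonneg)
next
  fix x show "(\<Sum>y\<in>V. \<mu> x * \<nu> y) = \<mu> x" using assms(4) by (simp add: sum_distrib_left[symmetric])
next
  fix y show "(\<Sum>x\<in>V. \<mu> x * \<nu> y) = \<nu> y" using assms(3) by (simp add: sum_distrib_right[symmetric])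
qed

lemma W_bdd: "bdd_below {(\<Sum>x\<in>V. \<Sum>y\<in>V. \<pi> x y * d x y) | \<pi>. coupling \<mu> \<nu> \<pi>}"
  by (rule bdd_belowI[of _ 0]) (auto simp: coupling_def intro!: sum_nonneg mult_nonneg_nonneg d_nonneg)

lemma W_upper: "coupling \<mu> \<nu> \<pi> \<Longrightarrow> wasserstein V d \<mu> \<nu> \<le> (\<Sum>x\<in>V. \<Sum>y\<in>V. \<pi> x y * d x y)"
  unfolding W_def' by (rule cInf_lower) (auto intro: W_bdd)

lemma W_lower:
  assumes "\<forall>x\<in>V. 0 \<le> \<mu> x" "\<forall>x\<in>V. 0 \<le> \<nu> x" "(\<Sum>x\<in>V. \<mu> x) = 1" "(\<Sum>x\<in>V. \<nu> x) = 1"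
    and l: "lip \<phi>"
  shows "(\<Sum>x\<in>V. \<mu> x * \<phi> x) - (\<Sum>y\<in>V. \<nu> y * \<phi> y) \<le> wasserstein V d \<mu> \<nu>"
  unfolding W_def'
proof (rule cInf_greatest)
  show "{(\<Sum>x\<in>V. \<Sum>y\<in>V. \<pi> x y * d x y) | \<pi>. coupling \<mu> \<nu> \<pi>} \<noteq> {}"
    using coupling_ex[OF assms(1-4)] by blast
next
  fix c assume "c \<in> {(\<Sum>x\<in>V. \<Sum>y\<in>V. \<pi> x y * d x y) | \<pi>. coupling \<mu> \<nu> \<pi>}"
  then obtain \<pi> where p: "coupling \<mu> \<nu> \<pi>" and c: "c = (\<Sum>x\<in>V. \<Sum>y\<in>V. \<pi> x y * d x y)" by auto
  have "(\<Sum>x\<in>V. \<Sum>y\<in>V. \<pi> x y * (\<phi> x - \<phi> y)) \<le> (\<Sum>x\<in>V. \<Sum>y\<in>V. \<pi> x y * d x y)"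
    using p l by (auto simp: coupling_def lip_def intro!: sum_mono mult_left_mono)
  moreover have "(\<Sum>x\<in>V. \<Sum>y\<in>V. \<pi> x y * (\<phi> x - \<phi> y)) = (\<Sum>x\<in>V. \<mu> x * \<phi> x) - (\<Sum>y\<in>V. \<nu> y * \<phi> y)"
  proof -
    have "(\<Sum>x\<in>V. \<Sum>y\<in>V. \<pi> x y * (\<phi> x - \<phi> y)) = (\<Sum>x\<in>V. \<Sum>y\<in>V. \<pi> x y * \<phi> x) - (\<Sum>x\<in>V. \<Sum>y\<in>V. \<pi> x y * \<phi> y)"
      by (simp add: right_diff_distrib sum_subtractf)
    also have "(\<Sum>x\<in>V. \<Sum>y\<in>V. \<pi> x y * \<phi> x) = (\<Sum>x\<in>V. \<mu> x * \<phi> x)"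
      using p by (simp add: coupling_def sum_distrib_right[symmetric])
    also have "(\<Sum>x\<in>V. \<Sum>y\<in>V. \<pi> x y * \<phi> y) = (\<Sum>y\<in>V. \<nu> y * \<phi> y)"
      using p by (subst sum.swap) (simp add: coupling_def sum_distrib_right[symmetric])
    finally show ?thesis .
  qed
  ultimately show "(\<Sum>x\<in>V. \<mu> x * \<phi> x) - (\<Sum>y\<in>V. \<nu> y * \<phi> y) \<le> c" using c by simp
qed

end

context hg begin

lemma sum_div_aux: "(\<Sum>h\<in>T. 1 / (n * c h) * X h) = (\<Sum>h\<in>T. 1 / c h * X h) / (n::real)"
  by (simp add: sum_divide_distrib mult.commute)

lemma tail_eq: "mu_tail_vertex H w \<alpha> n x z = mu_in H w \<alpha> x z / n"
  unfolding mu_tail_vertex_def mu_in_def sum_div_aux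
  by (simp add: add_divide_distrib)

lemma head_eq: "mu_head_vertex H w \<alpha> n x z = mu_out H w \<alpha> x z / n"
  unfolding mu_head_vertex_def mu_out_def sum_div_aux
  by (simp add: add_divide_distrib)

lemma mu_A_eq: "mu_A H w \<alpha> h z = (\<Sum>x\<in>fst h. mu_in H w \<alpha> x z) / real (card (fst h))"
  unfolding mu_A_def tail_eq by (simp add: sum_divide_distrib)

lemma mu_B_eq: "mu_B H w \<alpha> h z = (\<Sum>x\<in>snd h. mu_in H w \<alpha> x z) / real (card (snd h))"
  unfolding mu_B_def head_eq mu_out_eq by (simp add: sum_divide_distrib)

lemma avg_props:
  assumes X: "X \<subseteq> V" "X \<noteq> {}" and a: "0 \<le> \<alpha>" "\<alpha> \<le> 1"
  shows "\<forall>z\<in>V. 0 \<le> (\<Sum>x\<in>X. mu_in H w \<alpha> x z) / real (card X)"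
    "(\<Sum>z\<in>V. (\<Sum>x\<in>X. mu_in H w \<alpha> x z) / real (card X)) = 1"
    "(\<Sum>z\<in>V. (\<Sum>x\<in>X. mu_in H w \<alpha> x z) / real (card X) * \<phi> z) =
       (\<Sum>x\<in>X. \<Sum>z\<in>V. mu_in H w \<alpha> x z * \<phi> z) / real (card X)"
proof -
  have fX: "finite X" using X finV finite_subset by blast
  have cX: "0 < real (card X)" using fX X by (simp add: card_gt_0_iff)
  show "\<forall>z\<in>V. 0 \<le> (\<Sum>x\<in>X. mu_in H w \<alpha> x z) / real (card X)"
    using mu_in_nonneg[OF a] by (auto intro!: divide_nonneg_nonneg sum_nonneg)
  have "(\<Sum>z\<in>V. (\<Sum>x\<in>X. mu_in H w \<alpha> x z) / real (card X)) = (\<Sum>x\<in>X. \<Sum>z\<in>V. mu_in H w \<alpha> x z) / real (card X)"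
    by (simp add: sum_divide_distrib[symmetric] sum.swap[of _ V])
  also have "\<dots> = (\<Sum>x\<in>X. 1) / real (card X)"
    using mu_in_mass X by (intro arg_cong[where f="\<lambda>t. t / real (card X)"] sum.cong) auto
  finally show "(\<Sum>z\<in>V. (\<Sum>x\<in>X. mu_in H w \<alpha> x z) / real (card X)) = 1" using cX by simp
  show "(\<Sum>z\<in>V. (\<Sum>x\<in>X. mu_in H w \<alpha> x z) / real (card X) * \<phi> z) =
       (\<Sum>x\<in>X. \<Sum>z\<in>V. mu_in H w \<alpha> x z * \<phi> z) / real (card X)"
    by (simp add: sum_divide_distrib[symmetric] sum_distrib_right sum.swap[of _ V] divide_simps)
qed


lemma lip_d: assumes "y \<in> V" shows "lip (\<lambda>z. d z y)"
  unfolding lip_def using d_triangle assms by (smt (verit))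

lemma avg_lower:
  assumes X: "X \<subseteq> V" "X \<noteq> {}" and a: "0 \<le> \<alpha>" "\<alpha> \<le> 1" and l: "lip \<phi>"
    and b: "\<And>x. x \<in> X \<Longrightarrow> lo \<le> \<phi> x"
  shows "lo - (1-\<alpha>) * wmx \<le> (\<Sum>z\<in>V. (\<Sum>x\<in>X. mu_in H w \<alpha> x z) / real (card X) * \<phi> z)"
proof -
  have fX: "finite X" using X finV finite_subset by blast
  have cX: "0 < real (card X)" using fX X by (simp add: card_gt_0_iff)
  have "real (card X) * (lo - (1-\<alpha>) * wmx) \<le> (\<Sum>x\<in>X. \<Sum>z\<in>V. mu_in H w \<alpha> x z * \<phi> z)"
  proof (rule sum_bounded_below[of X "lo - (1-\<alpha>) * wmx", simplified])
    fix x assume x: "x \<in> X"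
    then have "x \<in> V" using X by auto
    from mu_in_lip(1)[OF this l a] b[OF x]
    show "lo - (1-\<alpha>) * wmx \<le> (\<Sum>z\<in>V. mu_in H w \<alpha> x z * \<phi> z)" by linarith
  qed
  then show ?thesis unfolding avg_props(3)[OF X a] using cX by (simp add: field_simps)
qed

lemma avg_upper:
  assumes X: "X \<subseteq> V" "X \<noteq> {}" and a: "0 \<le> \<alpha>" "\<alpha> \<le> 1" and l: "lip \<phi>"
    and b: "\<And>x. x \<in> X \<Longrightarrow> \<phi> x \<le> hi"
  shows "(\<Sum>z\<in>V. (\<Sum>x\<in>X. mu_in H w \<alpha> x z) / real (card X) * \<phi> z) \<le> hi + (1-\<alpha>) * wmx"
proof -
  have fX: "finite X" using X finV finite_subset by blast
  have cX: "0 < real (card X)" using fX X by (simp add: card_gt_0_iff)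
  have "(\<Sum>x\<in>X. \<Sum>z\<in>V. mu_in H w \<alpha> x z * \<phi> z) \<le> real (card X) * (hi + (1-\<alpha>) * wmx)"
  proof (rule sum_bounded_above[of X _ "hi + (1-\<alpha>) * wmx", simplified])
    fix x assume x: "x \<in> X"
    then have "x \<in> V" using X by auto
    from mu_in_lip(2)[OF this l a] b[OF x]
    show "(\<Sum>z\<in>V. mu_in H w \<alpha> x z * \<phi> z) \<le> hi + (1-\<alpha>) * wmx" by linarith
  qed
  then show ?thesis unfolding avg_props(3)[OF X a] using cX by (simp add: field_simps)
qed

lemma edge_W_lower:
  assumes h: "h \<in> H" and a: "0 \<le> \<alpha>" "\<alpha> \<le> 1"
  shows "hedge_len H w h - 2 * (1-\<alpha>) * wmx \<le> wasserstein V d (mu_A H w \<alpha> h) (mu_B H w \<alpha> h)"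
proof -
  define B where "B = snd h"
  define A where "A = fst h"
  have AV: "A \<subseteq> V" "A \<noteq> {}" and BV: "B \<subseteq> V" "B \<noteq> {}" using edge[OF h] by (auto simp: A_def B_def)
  have fB: "finite B" using BV finV finite_subset by blast
  have fA: "finite A" using AV finV finite_subset by blast
  define \<phi> where "\<phi> z = Min ((\<lambda>y. d z y) ` B)" for z
  have phi_in: "\<exists>y\<in>B. \<phi> z = d z y" for z
  proof -
    have "Min ((\<lambda>y. d z y) ` B) \<in> (\<lambda>y. d z y) ` B" by (rule Min_in) (use fB BV in auto)
    then show ?thesis unfolding \<phi>_def by blast
  qed
  have phi_le: "y \<in> B \<Longrightarrow> \<phi> z \<le> d z y" for y z unfolding \<phi>_def using fB by auto
  have l: "lip \<phi>" unfolding lip_def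
  proof (intro ballI)
    fix a b assume ab: "a \<in> V" "b \<in> V"
    obtain y where y: "y \<in> B" "\<phi> b = d b y" using phi_in by blast
    have "\<phi> a \<le> d a y" using phi_le y by auto
    also have "\<dots> \<le> d a b + d b y" using d_triangle ab y BV by auto
    finally show "\<phi> a - \<phi> b \<le> d a b" using y by simp
  qed
  define L where "L = hedge_len H w h"
  have L: "L \<le> \<phi> x" if "x \<in> A" for x
  proof -
    obtain y where y: "y \<in> B" "\<phi> x = d x y" using phi_in by blast
    have "finite {hdist H w x y | x y. x \<in> fst h \<and> y \<in> snd h}"
    proof -
      have "{hdist H w x y | x y. x \<in> fst h \<and> y \<in> snd h} = (\<lambda>(x,y). d x y) ` (A \<times> B)"
        by (auto simp: A_def B_def)
      then show ?thesis using fA fB by simp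
    qed
    then show ?thesis unfolding L_def hedge_len_def using y that by (auto simp: A_def B_def intro!: Min_le)
  qed
  have U: "\<phi> y \<le> 0" if "y \<in> B" for y using phi_le[OF that, of y] by (simp add: hdist_def)
  have muA: "mu_A H w \<alpha> h = (\<lambda>z. (\<Sum>x\<in>A. mu_in H w \<alpha> x z) / real (card A))"
    unfolding A_def by (rule ext, rule mu_A_eq)
  have muB: "mu_B H w \<alpha> h = (\<lambda>z. (\<Sum>x\<in>B. mu_in H w \<alpha> x z) / real (card B))"
    unfolding B_def by (rule ext, rule mu_B_eq)
  have "(\<Sum>z\<in>V. mu_A H w \<alpha> h z * \<phi> z) - (\<Sum>z\<in>V. mu_B H w \<alpha> h z * \<phi> z) \<le> wasserstein V d (mu_A H w \<alpha> h) (mu_B H w \<alpha> h)"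
    unfolding muA muB by (rule W_lower[OF avg_props(1)[OF AV a] avg_props(1)[OF BV a] avg_props(2)[OF AV a] avg_props(2)[OF BV a] l])
  moreover have "L - (1-\<alpha>) * wmx \<le> (\<Sum>z\<in>V. mu_A H w \<alpha> h z * \<phi> z)"
    unfolding muA by (rule avg_lower[OF AV a l L])
  moreover have "(\<Sum>z\<in>V. mu_B H w \<alpha> h z * \<phi> z) \<le> 0 + (1-\<alpha>) * wmx"
    unfolding muB by (rule avg_upper[OF BV a l U])
  ultimately show ?thesis unfolding L_def by linarith
qed

lemma edge_L_pos: assumes h: "h \<in> H" shows "0 < hedge_len H w h"
proof -
  have fA: "finite (fst h)" and fB: "finite (snd h)" using edge[OF h] finV finite_subset by blast+
  have eq: "{hdist H w x y | x y. x \<in> fst h \<and> y \<in> snd h} = (\<lambda>(x,y). d x y) ` (fst h \<times> snd h)" by auto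
  have "0 < Min ((\<lambda>(x,y). d x y) ` (fst h \<times> snd h))"
    using fA fB edge[OF h] by (auto intro!: d_pos)
  then show ?thesis unfolding hedge_len_def eq .
qed

lemma part1:
  assumes h: "h \<in> H" and t: "((\<lambda>\<alpha>. kappa_alpha_edge V H w \<alpha> h / (1 - \<alpha>)) \<longlongrightarrow> k) (at_left 1)" and k: "k > 0"
  shows "hedge_len H w h \<le> 2 * wmax H w / k"
proof -
  define L where "L = hedge_len H w h"
  have Lp: "0 < L" using edge_L_pos[OF h] L_def by simp
  have ev: "eventually (\<lambda>\<alpha>. kappa_alpha_edge V H w \<alpha> h / (1 - \<alpha>) \<le> 2 * wmx / L) (at_left 1)"
    using eventually_at_left_real[of 0 "1::real", OF zero_less_one]
  proof (rule eventually_mono)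
    fix \<alpha> :: real assume "\<alpha> \<in> {0<..<1}"
    then have a: "0 < \<alpha> \<and> \<alpha> < 1" by simp
    have W: "L - 2 * (1-\<alpha>) * wmx \<le> wasserstein V d (mu_A H w \<alpha> h) (mu_B H w \<alpha> h)"
      using edge_W_lower[OF h] a L_def by auto
    define Wv where "Wv = wasserstein V d (mu_A H w \<alpha> h) (mu_B H w \<alpha> h)"
    have "L - Wv \<le> 2 * (1-\<alpha>) * wmx" using W Wv_def by linarith
    then have "(L - Wv) / L \<le> 2 * (1-\<alpha>) * wmx / L" by (rule divide_right_mono) (use Lp in simp)
    moreover have "1 - Wv / L = (L - Wv) / L" using Lp by (simp add: diff_divide_distrib)
    ultimately have "kappa_alpha_edge V H w \<alpha> h \<le> 2 * (1-\<alpha>) * wmx / L"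
      unfolding kappa_alpha_edge_def L_def[symmetric] Wv_def by simp
    then show "kappa_alpha_edge V H w \<alpha> h / (1 - \<alpha>) \<le> 2 * wmx / L"
      using a by (simp add: field_simps)
  qed
  have "k \<le> 2 * wmx / L" using tendsto_upperbound[OF t ev trivial_limit_at_left_real] .
  then show ?thesis using k Lp unfolding L_def wmx_def by (simp add: field_simps)
qed

end

context hg begin

lemma mu_out_fun: "mu_out H w \<alpha> u = mu_in H w \<alpha> u"
  by (rule ext, rule mu_out_eq)

abbreviation F where "F \<alpha> \<phi> z \<equiv> (\<Sum>t\<in>V. mu_in H w \<alpha> z t * \<phi> t)"

lemma vertex_W_lower:
  assumes "a \<in> V" "b \<in> V" "0 \<le> \<alpha>" "\<alpha> \<le> 1" "lip \<phi>"
  shows "F \<alpha> \<phi> a - F \<alpha> \<phi> b \<le> wasserstein V d (mu_in H w \<alpha> a) (mu_out H w \<alpha> b)"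
  unfolding mu_out_fun
  by (rule W_lower) (use assms mu_in_nonneg mu_in_mass in auto)

lemma vertex_W_lower2:
  assumes "a \<in> V" "b \<in> V" "0 \<le> \<alpha>" "\<alpha> \<le> 1"
  shows "d a b - 2 * (1-\<alpha>) * wmx \<le> wasserstein V d (mu_in H w \<alpha> a) (mu_out H w \<alpha> b)"
proof -
  have l: "lip (\<lambda>z. d z b)" by (rule lip_d[OF assms(2)])
  have 1: "d a b - (1-\<alpha>) * wmx \<le> F \<alpha> (\<lambda>z. d z b) a" using mu_in_lip(1)[OF assms(1) l assms(3,4)] .
  have 2: "F \<alpha> (\<lambda>z. d z b) b \<le> d b b + (1-\<alpha>) * wmx" using mu_in_lip(2)[OF assms(2) l assms(3,4)] .
  have "d b b = 0" by (simp add: hdist_def)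
  then show ?thesis using 1 2 vertex_W_lower[OF assms l] by linarith
qed

definition g where "g a b \<alpha> = kappa_alpha_vertex V H w \<alpha> a b / (1 - \<alpha>)"

lemma g_bound:
  assumes "a \<in> V" "b \<in> V" "a \<noteq> b" "0 \<le> \<alpha>" "\<alpha> < 1"
  shows "g a b \<alpha> \<le> 2 * wmx / d a b"
proof -
  define D where "D = d a b"
  have Dp: "0 < D" using d_pos assms D_def by auto
  define Wv where "Wv = wasserstein V d (mu_in H w \<alpha> a) (mu_out H w \<alpha> b)"
  have "D - Wv \<le> 2 * (1-\<alpha>) * wmx" using vertex_W_lower2[of a b \<alpha>] assms Wv_def D_def by auto
  then have "(D - Wv) / D \<le> 2 * (1-\<alpha>) * wmx / D" by (rule divide_right_mono) (use Dp in simp)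
  moreover have "1 - Wv / D = (D - Wv) / D" using Dp by (simp add: diff_divide_distrib)
  ultimately have "kappa_alpha_vertex V H w \<alpha> a b \<le> 2 * (1-\<alpha>) * wmx / D"
    unfolding kappa_alpha_vertex_def D_def[symmetric] Wv_def by simp
  then show ?thesis unfolding g_def D_def[symmetric] using assms by (simp add: field_simps)
qed

lemma mu_in_interp:
  assumes "0 \<le> \<alpha>" "\<alpha> < \<beta>" "\<beta> < 1"
  shows "mu_in H w \<beta> u x = (1-\<beta>)/(1-\<alpha>) * mu_in H w \<alpha> u x + (1 - (1-\<beta>)/(1-\<alpha>)) * (if x = u then 1 else 0)"
proof -
  define P where "P = (\<Sum>h'\<in>{h'\<in>H. u \<in> snd h' \<and> x \<in> fst h'}.
        (1 / real (card (fst h'))) * (w h' / (\<Sum>h''\<in>{h''\<in>H. u \<in> snd h''}. w h'')))"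
  define t where "t = (1-\<beta>)/(1-\<alpha>)"
  have t1: "t * (1-\<alpha>) = 1-\<beta>" using assms by (simp add: t_def)
  have "t * ((if x = u then \<alpha> else 0) + (1-\<alpha>) * P) + (1-t) * (if x = u then 1 else 0)
      = (if x = u then 1 - t * (1-\<alpha>) else 0) + t * (1-\<alpha>) * P"
    by (cases "x = u") (simp_all add: algebra_simps)
  also have "\<dots> = (if x = u then \<beta> else 0) + (1-\<beta>) * P" unfolding t1 by simp
  finally show ?thesis unfolding mu_in_def P_def[symmetric] t_def by simp
qed

lemma g_mono:
  assumes ab: "a \<in> V" "b \<in> V" "a \<noteq> b" and al: "0 \<le> \<alpha>" "\<alpha> < \<beta>" "\<beta> < 1"
  shows "g a b \<alpha> \<le> g a b \<beta>"
proof -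
  define t where "t = (1-\<beta>)/(1-\<alpha>)"
  have t: "0 < t" "t \<le> 1" using al by (auto simp: t_def)
  define D where "D = d a b"
  have Dp: "0 < D" using d_pos ab D_def by auto
  define Wa where "Wa = wasserstein V d (mu_in H w \<alpha> a) (mu_out H w \<alpha> b)"
  define Wb where "Wb = wasserstein V d (mu_in H w \<beta> a) (mu_out H w \<beta> b)"
  have key: "(Wb - (1-t) * D) / t \<le> Wa"
    unfolding Wa_def W_def'
  proof (rule cInf_greatest)
    show "{\<Sum>x\<in>V. \<Sum>y\<in>V. \<pi> x y * d x y |\<pi>. coupling (mu_in H w \<alpha> a) (mu_out H w \<alpha> b) \<pi>} \<noteq> {}"
      using coupling_ex[of "mu_in H w \<alpha> a" "mu_out H w \<alpha> b"] ab al mu_in_nonneg mu_in_mass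
      unfolding mu_out_fun by force
  next
    fix c assume "c \<in> {\<Sum>x\<in>V. \<Sum>y\<in>V. \<pi> x y * d x y |\<pi>. coupling (mu_in H w \<alpha> a) (mu_out H w \<alpha> b) \<pi>}"
    then obtain \<pi> where p: "coupling (mu_in H w \<alpha> a) (mu_out H w \<alpha> b) \<pi>"
      and c: "c = (\<Sum>x\<in>V. \<Sum>y\<in>V. \<pi> x y * d x y)" by auto
    define \<pi>' where "\<pi>' x y = t * \<pi> x y + (1-t) * (if x = a \<and> y = b then 1 else 0)" for x y
    have cp: "coupling (mu_in H w \<beta> a) (mu_out H w \<beta> b) \<pi>'"
      unfolding coupling_def
    proof (intro conjI ballI)
      fix x y assume "x \<in> V" "y \<in> V"
      then show "0 \<le> \<pi>' x y" using p t unfolding coupling_def \<pi>'_def by (auto intro!: add_nonneg_nonneg mult_nonneg_nonneg)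
    next
      fix x assume x: "x \<in> V"
      have "(\<Sum>y\<in>V. \<pi>' x y) = t * (\<Sum>y\<in>V. \<pi> x y) + (1-t) * (\<Sum>y\<in>V. (if x = a \<and> y = b then 1 else 0))"
        unfolding \<pi>'_def by (simp add: sum.distrib sum_distrib_left)
      also have "(\<Sum>y\<in>V. (if x = a \<and> y = b then 1 else 0)) = (if x = a then 1 else (0::real))"
        using ab finV by (cases "x = a") auto
      also have "(\<Sum>y\<in>V. \<pi> x y) = mu_in H w \<alpha> a x" using p x by (simp add: coupling_def)
      finally show "(\<Sum>y\<in>V. \<pi>' x y) = mu_in H w \<beta> a x"
        using mu_in_interp[OF al, of a x] by (simp add: t_def)
    next
      fix y assume y: "y \<in> V"
      have "(\<Sum>x\<in>V. \<pi>' x y) = t * (\<Sum>x\<in>V. \<pi> x y) + (1-t) * (\<Sum>x\<in>V. (if x = a \<and> y = b then 1 else 0))"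
        unfolding \<pi>'_def by (simp add: sum.distrib sum_distrib_left)
      also have "(\<Sum>x\<in>V. (if x = a \<and> y = b then 1 else 0)) = (if y = b then 1 else (0::real))"
        using ab finV by (cases "y = b") auto
      also have "(\<Sum>x\<in>V. \<pi> x y) = mu_out H w \<alpha> b y" using p y by (simp add: coupling_def)
      finally show "(\<Sum>x\<in>V. \<pi>' x y) = mu_out H w \<beta> b y"
        using mu_in_interp[OF al, of b y] unfolding mu_out_fun by (simp add: t_def)
    qed
    have "Wb \<le> (\<Sum>x\<in>V. \<Sum>y\<in>V. \<pi>' x y * d x y)" unfolding Wb_def by (rule W_upper[OF cp])
    also have "(\<Sum>x\<in>V. \<Sum>y\<in>V. \<pi>' x y * d x y) = t * c + (1-t) * (\<Sum>x\<in>V. \<Sum>y\<in>V. (if x = a \<and> y = b then 1 else 0) * d x y)"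
      unfolding \<pi>'_def c by (simp add: distrib_right sum.distrib sum_distrib_left mult.assoc)
    also have "(\<Sum>x\<in>V. \<Sum>y\<in>V. (if x = a \<and> y = b then 1 else 0) * d x y) = D"
    proof -
      have "(\<Sum>x\<in>V. \<Sum>y\<in>V. (if x = a \<and> y = b then 1 else 0) * d x y) = (\<Sum>x\<in>V. if x = a then d a b else 0)"
      proof (rule sum.cong[OF refl])
        fix x assume "x \<in> V"
        have "(\<Sum>y\<in>V. (if x = a \<and> y = b then 1 else 0) * d x y) = (\<Sum>y\<in>V. if b = y then (if x = a then d a b else 0) else 0)"
          by (rule sum.cong) auto
        also have "\<dots> = (if x = a then d a b else 0)" using ab finV by simp
        finally show "(\<Sum>y\<in>V. (if x = a \<and> y = b then 1 else 0) * d x y) = (if x = a then d a b else 0)" .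
      qed
      also have "\<dots> = D" using ab finV D_def by simp
      finally show ?thesis .
    qed
    finally show "(Wb - (1-t) * D) / t \<le> c" using t by (simp add: field_simps)
  qed
  have "Wb - (1-t) * D \<le> Wa * t" using key t by (simp add: pos_divide_le_eq)
  then have "t * (D - Wa) \<le> D - Wb" by (simp add: algebra_simps)
  moreover have "t * (D - Wa) = (1-\<beta>) * ((D - Wa) / (1-\<alpha>))" by (simp add: t_def)
  ultimately have "(1-\<beta>) * ((D - Wa) / (1-\<alpha>)) \<le> D - Wb" by simp
  then have "(D - Wa) / (1-\<alpha>) \<le> (D - Wb) / (1-\<beta>)" using al by (simp add: pos_le_divide_eq mult.commute)
  then have "((D - Wa) / (1-\<alpha>)) / D \<le> ((D - Wb) / (1-\<beta>)) / D" by (rule divide_right_mono) (use Dp in simp)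
  moreover have "((D - Wa) / (1-\<alpha>)) / D = ((D - Wa) / D) / (1-\<alpha>)" "((D - Wb) / (1-\<beta>)) / D = ((D - Wb) / D) / (1-\<beta>)"
    by (simp_all add: divide_divide_eq_left mult.commute)
  ultimately have "((D - Wa) / D) / (1-\<alpha>) \<le> ((D - Wb) / D) / (1-\<beta>)" by argo
  moreover have "1 - Wa / D = (D - Wa) / D" "1 - Wb / D = (D - Wb) / D" using Dp by (simp_all add: diff_divide_distrib)
  ultimately show ?thesis unfolding g_def kappa_alpha_vertex_def D_def[symmetric] Wa_def[symmetric] Wb_def[symmetric]
    by simp
qed

end

context hg begin

lemma g_lim:
  assumes ab: "a \<in> V" "b \<in> V" "a \<noteq> b"
  shows "(g a b \<longlongrightarrow> kappa_vertex V H w a b) (at_left 1)"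
proof -
  define L where "L = Sup (g a b ` {0<..<1})"
  have bdd: "bdd_above (g a b ` {0<..<1})"
    by (rule bdd_aboveI[of _ "2 * wmx / d a b"]) (use g_bound[OF ab] in auto)
  have ne: "g a b ` {0<..<(1::real)} \<noteq> {}" by auto
  have t: "(g a b \<longlongrightarrow> L) (at_left 1)"
  proof (rule order_tendstoI)
    fix q assume q: "q < L"
    then obtain \<alpha>0 where a0: "\<alpha>0 \<in> {0<..<1}" "q < g a b \<alpha>0"
      unfolding L_def using less_cSUP_iff[OF ne[unfolded image_is_empty] bdd] by blast
    show "eventually (\<lambda>x. q < g a b x) (at_left 1)"
      using eventually_at_left_real[of \<alpha>0 1] a0
    proof (intro eventually_mono[OF eventually_at_left_real[of \<alpha>0 1]])
      show "\<alpha>0 < 1" using a0 by simp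
    next
      fix x assume "x \<in> {\<alpha>0<..<(1::real)}"
      then have "g a b \<alpha>0 \<le> g a b x" using g_mono[OF ab, of \<alpha>0 x] a0 by auto
      then show "q < g a b x" using a0 by simp
    qed
  next
    fix q assume q: "L < q"
    show "eventually (\<lambda>x. g a b x < q) (at_left 1)"
    proof (intro eventually_mono[OF eventually_at_left_real[of 0 1]])
      show "(0::real) < 1" by simp
    next
      fix x assume "x \<in> {0<..<(1::real)}"
      then have "g a b x \<le> L" unfolding L_def by (intro cSUP_upper bdd)
      then show "g a b x < q" using q by simp
    qed
  qed
  have "kappa_vertex V H w a b = L"
    unfolding kappa_vertex_def using tendsto_Lim[OF trivial_limit_at_left_real t] unfolding g_def .
  then show ?thesis using t by simp
qed


lemma pair_bound:
  assumes hyp: "\<forall>h\<in>H. \<forall>u\<in>fst h. \<forall>v\<in>snd h. kappa_vertex V H w u v \<ge> \<kappa>"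
    and xy: "x \<in> V" "y \<in> V" "x \<noteq> y" and e: "0 < \<epsilon>" "\<epsilon> < \<kappa>"
  shows "(\<kappa> - \<epsilon>) * d x y \<le> 2 * wmx"
proof -
  define P where "P = {p \<in> V \<times> V. \<exists>h\<in>H. fst p \<in> fst h \<and> snd p \<in> snd h}"
  have finP: "finite P" unfolding P_def using finV by simp
  have Pprop: "fst p \<in> V \<and> snd p \<in> V \<and> fst p \<noteq> snd p \<and> \<kappa> \<le> kappa_vertex V H w (fst p) (snd p)" if pP: "p \<in> P" for p
  proof -
    obtain h where h: "h \<in> H" "fst p \<in> fst h" "snd p \<in> snd h" "p \<in> V \<times> V" using pP unfolding P_def by blast
    then show ?thesis using hyp edge(5)[OF h(1)] by (auto simp: mem_Times_iff)
  qed
  have ev1: "eventually (\<lambda>\<alpha>. \<forall>p\<in>P. \<kappa> - \<epsilon> < g (fst p) (snd p) \<alpha>) (at_left 1)"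
  proof (rule eventually_ball_finite[OF finP], intro ballI)
    fix p assume p: "p \<in> P"
    show "eventually (\<lambda>\<alpha>. \<kappa> - \<epsilon> < g (fst p) (snd p) \<alpha>) (at_left 1)"
      using order_tendstoD(1)[OF g_lim[of "fst p" "snd p"], of "\<kappa> - \<epsilon>"] Pprop[OF p] e by auto
  qed
  have ev2: "eventually (\<lambda>\<alpha>. \<alpha> \<in> {0<..<1}) (at_left (1::real))"
    by (rule eventually_at_left_real) simp
  have "((\<lambda>\<alpha>. (\<kappa> - \<epsilon>) * (1 - \<alpha>)) \<longlongrightarrow> (\<kappa> - \<epsilon>) * (1 - 1)) (at_left (1::real))"
    by (intro tendsto_intros)
  then have ev3: "eventually (\<lambda>\<alpha>. (\<kappa> - \<epsilon>) * (1 - \<alpha>) < 1) (at_left (1::real))"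
    by (rule order_tendstoD(2)) simp
  obtain \<alpha> where al: "\<forall>p\<in>P. \<kappa> - \<epsilon> < g (fst p) (snd p) \<alpha>" "\<alpha> \<in> {0<..<1}" "(\<kappa> - \<epsilon>) * (1 - \<alpha>) < 1"
    using eventually_happens'[OF trivial_limit_at_left_real eventually_conj[OF ev1 eventually_conj[OF ev2 ev3]]] by blast
  have a01: "0 \<le> \<alpha>" "\<alpha> \<le> 1" "\<alpha> < 1" using al(2) by auto
  define c where "c = 1 - (\<kappa> - \<epsilon>) * (1 - \<alpha>)"
  have cp: "0 < c" using al(3) c_def by simp
  define \<phi> where "\<phi> z = d z y" for z
  have l: "lip \<phi>" unfolding \<phi>_def by (rule lip_d[OF xy(2)])
  have step: "F \<alpha> \<phi> a - F \<alpha> \<phi> b \<le> c * w h" if h: "h \<in> H" "a \<in> fst h" "b \<in> snd h" for h a b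
  proof -
    have ab: "a \<in> V" "b \<in> V" "a \<noteq> b" using edge[OF h(1)] h by auto
    have "(a, b) \<in> P" unfolding P_def using ab h by auto
    then have gk: "\<kappa> - \<epsilon> < g a b \<alpha>" using al(1) by auto
    define D where "D = d a b"
    have Dp: "0 < D" using d_pos ab D_def by auto
    define Wv where "Wv = wasserstein V d (mu_in H w \<alpha> a) (mu_out H w \<alpha> b)"
    have "(\<kappa> - \<epsilon>) * (1 - \<alpha>) < 1 - Wv / D"
      using gk a01 unfolding g_def kappa_alpha_vertex_def D_def[symmetric] Wv_def[symmetric]
      by (simp add: pos_less_divide_eq)
    then have "Wv / D < c" unfolding c_def by simp
    then have "Wv < c * D" using Dp by (simp add: pos_divide_less_eq)
    also have "c * D \<le> c * w h" using d_le_edge[OF h] cp D_def by simp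
    finally have "Wv \<le> c * w h" by simp
    moreover have "F \<alpha> \<phi> a - F \<alpha> \<phi> b \<le> Wv" unfolding Wv_def by (rule vertex_W_lower[OF ab(1,2) a01(1,2) l])
    ultimately show ?thesis by simp
  qed
  have path: "a \<in> V \<Longrightarrow> dpath H a y hs \<Longrightarrow> F \<alpha> \<phi> a - F \<alpha> \<phi> y \<le> c * sum_list (map w hs)" for a hs
  proof (induction hs arbitrary: a)
    case Nil then show ?case by (simp add: dpath_def)
  next
    case (Cons h t)
    have h: "h \<in> H" "a \<in> fst h" using Cons.prems by (auto simp: dpath_def)
    show ?case
    proof (cases "t = []")
      case True
      then have yb: "y \<in> snd h" using Cons.prems by (simp add: dpath_def)
      show ?thesis using step[OF h yb] True by simp
    next
      case False
      have "Suc 0 < length (h#t)" using False by simp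
      then have "snd ((h#t) ! 0) \<inter> fst ((h#t) ! Suc 0) \<noteq> {}" using Cons.prems(2) unfolding dpath_def by blast
      then obtain b where b: "b \<in> snd h" "b \<in> fst (hd t)" using False by (auto simp: hd_conv_nth)
      have bV: "b \<in> V" using edge(4)[OF h(1)] b by auto
      have "dpath H b y t"
      proof -
        have "\<forall>j. Suc j < length t \<longrightarrow> snd (t ! j) \<inter> fst (t ! Suc j) \<noteq> {}"
        proof (intro allI impI)
          fix j assume "Suc j < length t"
          then have "Suc (Suc j) < length (h#t)" by simp
          then show "snd (t ! j) \<inter> fst (t ! Suc j) \<noteq> {}" using Cons.prems(2) unfolding dpath_def
            by (metis nth_Cons_Suc)
        qed
        then show ?thesis using Cons.prems False b by (auto simp: dpath_def)
      qed
      from Cons.IH[OF bV this] step[OF h b(1)]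
      show ?thesis by (simp add: algebra_simps)
    qed
  qed
  have "(F \<alpha> \<phi> x - F \<alpha> \<phi> y) / c \<le> Inf {sum_list (map w hs) | hs. dpath H x y hs}"
  proof (rule cInf_greatest[OF costs_ne[OF xy]])
    fix s assume "s \<in> {sum_list (map w hs) | hs. dpath H x y hs}"
    then obtain hs where "dpath H x y hs" "s = sum_list (map w hs)" by auto
    then show "(F \<alpha> \<phi> x - F \<alpha> \<phi> y) / c \<le> s" using path[OF xy(1)] cp by (simp add: pos_divide_le_eq mult.commute)
  qed
  then have "(F \<alpha> \<phi> x - F \<alpha> \<phi> y) / c \<le> d x y" using xy by (simp add: hdist_def)
  then have main: "F \<alpha> \<phi> x - F \<alpha> \<phi> y \<le> c * d x y" using cp by (simp add: pos_divide_le_eq mult.commute)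
  have 1: "\<phi> x - (1-\<alpha>) * wmx \<le> F \<alpha> \<phi> x" by (rule mu_in_lip(1)[OF xy(1) l a01(1,2)])
  have 2: "F \<alpha> \<phi> y \<le> \<phi> y + (1-\<alpha>) * wmx" by (rule mu_in_lip(2)[OF xy(2) l a01(1,2)])
  have "\<phi> y = 0" by (simp add: \<phi>_def hdist_def)
  then have "d x y - 2 * (1-\<alpha>) * wmx \<le> c * d x y" using 1 2 main unfolding \<phi>_def by linarith
  then have "(1-\<alpha>) * ((\<kappa> - \<epsilon>) * d x y) \<le> (1-\<alpha>) * (2 * wmx)" unfolding c_def by (simp add: algebra_simps)
  then show ?thesis using a01 by simp
qed


lemma part2:
  assumes k: "\<kappa> > 0" and hyp: "\<forall>h\<in>H. \<forall>u\<in>fst h. \<forall>v\<in>snd h. kappa_vertex V H w u v \<ge> \<kappa>"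
  shows "diam V H w \<le> 2 * wmax H w / \<kappa>"
proof -
  have pb: "d x y \<le> 2 * wmx / \<kappa>" if xy: "x \<in> V" "y \<in> V" for x y
  proof (cases "x = y")
    case True then show ?thesis using wmax_pos k by (simp add: hdist_def)
  next
    case False
    define D where "D = d x y"
    have Dp: "0 < D" using d_pos xy False D_def by auto
    have "\<kappa> * D \<le> 2 * wmx"
    proof (rule field_le_epsilon)
      fix e :: real assume e: "0 < e"
      define \<epsilon> where "\<epsilon> = min (\<kappa>/2) (e / D)"
      have ep: "0 < \<epsilon>" "\<epsilon> < \<kappa>" using k e Dp by (auto simp: \<epsilon>_def)
      have "(\<kappa> - \<epsilon>) * D \<le> 2 * wmx" using pair_bound[OF hyp xy False ep] D_def by simp
      moreover have "\<epsilon> * D \<le> e"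
      proof -
        have le: "\<epsilon> \<le> e / D" by (simp add: \<epsilon>_def)
        have "\<epsilon> * D \<le> e / D * D" using mult_right_mono[OF le, of D] Dp by linarith
        then show ?thesis using Dp by simp
      qed
      ultimately show "\<kappa> * D \<le> 2 * wmx + e" by (simp add: algebra_simps)
    qed
    then show ?thesis using k D_def by (simp add: pos_le_divide_eq mult.commute)
  qed
  have eq: "{hdist H w u v | u v. u \<in> V \<and> v \<in> V} = (\<lambda>(u,v). d u v) ` (V \<times> V)" by auto
  show ?thesis unfolding diam_def eq wmx_def[symmetric]
    using finV V_ne pb by (auto intro!: Max.boundedI)
qed

end


theorem mainTheorem8:
  fixes V :: "'v set" and H :: "'v hedge set" and w :: "'v hedge \<Rightarrow> real"
  assumes "oriented_hypergraph V H w"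
    and "strongly_connected V H"
    and "card V \<ge> 2"
  shows "(\<forall>h\<in>H. \<forall>k::real.
            ((\<lambda>\<alpha>. kappa_alpha_edge V H w \<alpha> h / (1 - \<alpha>)) \<longlongrightarrow> k) (at_left 1) \<and> k > 0
            \<longrightarrow> hedge_len H w h \<le> 2 * wmax H w / k)
       \<and> (\<forall>\<kappa>::real. \<kappa> > 0 \<and>
            (\<forall>h\<in>H. \<forall>u\<in>fst h. \<forall>v\<in>snd h. kappa_vertex V H w u v \<ge> \<kappa>)
            \<longrightarrow> diam V H w \<le> 2 * wmax H w / \<kappa>)"
proof -
  interpret hg V H w using assms by unfold_locales
  show ?thesis using part1 part2 by blast
qed

end
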